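(* Let $A$ be a $\{0,1\}$-matrix and let $\mathcal{C}=\{\omega(1),\dots,\omega(M)\}\subset B_*(X_A)$ be a prefix code, $\Sigma_{A(\mathcal{C})}=\{1,\dots,M\}$. The following are equivalent: (1) for any $\gamma\in B_*(X_A)$ there exists $\eta\in B_*(X_A)$ with $\gamma\eta\in B_*(X_A)$ and there exists a unique finite sequence $(i_1,\dots,i_k)\in(\Sigma_{A(\mathcal{C})})^k$ with $\gamma\eta=\omega(i_1)\omega(i_2)\cdots\omega(i_k)$; (2) for any $x=(x_n)_{n\in\mathbb{N}}\in X_A$ there exist a unique increasing sequence $1<k_1<k_2<\cdots$ of positive integers and $i_1,i_2,\dots\in\Sigma_{A(\mathcal{C})}$ such that $x_{[1,k_1)}=\omega(i_1)$ and $x_{[k_n,k_{n+1})}=\omega(i_{n+1})$ for all $n\ge1$, i.e. $x$ has a unique factorization $x=\omega(i_1)\omega(i_2)\cdots$.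
   Context: For an $N\times N$ matrix $A$ with entries in $\{0,1\}$, $\Sigma_A=\{1,\dots,N\}$ and $X_A$ is the set of sequences $(x_n)_{n\in\mathbb{N}}$ in $\Sigma_A$ with $A(x_n,x_{n+1})=1$ for all $n$, with product topology. $B_k(X_A)$ is the set of admissible words of length $k$ (those occurring in elements of $X_A$), and $B_*(X_A)=\bigcup_{k\ge0}B_k(X_A)$ including the empty word. $x_{[a,b)}$ denotes the word $x_ax_{a+1}\cdots x_{b-1}$. A code is a nonempty $\mathcal{C}\subset B_*(X_A)$ such that any equality $\omega(i_1)\cdots\omega(i_k)=\omega(j_1)\cdots\omega(j_n)$ of concatenations of words of $\mathcal{C}$ forces $n=k$ and $\omega(i_m)=\omega(j_m)$ for all $m$; a prefix code is a code in which no word is a prefix of another. *)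

theory Defs
  imports Main "HOL-Library.Sublist"
begin

text \<open>Symbols are 1..N, sequences are indexed
  from 0 (position 0 corresponds to the paper's index 1).  The matrix is a function
  A :: nat => nat => nat whose entries on {1..N} x {1..N} lie in {0,1}.\<close>

definition XA :: "nat \<Rightarrow> (nat \<Rightarrow> nat \<Rightarrow> nat) \<Rightarrow> (nat \<Rightarrow> nat) set" where
  "XA N A = {x. (\<forall>n. x n \<in> {1..N}) \<and> (\<forall>n. A (x n) (x (Suc n)) = 1)}"

definition word :: "(nat \<Rightarrow> nat) \<Rightarrow> nat \<Rightarrow> nat \<Rightarrow> nat list" where
  "word x a b = map x [a..<b]"

definition Bstar :: "nat \<Rightarrow> (nat \<Rightarrow> nat \<Rightarrow> nat) \<Rightarrow> nat list set" where
  "Bstar N A = {[]} \<union> {w. \<exists>x\<in>XA N A. \<exists>a. w = word x a (a + length w)}"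

definition is_code :: "nat \<Rightarrow> (nat \<Rightarrow> nat \<Rightarrow> nat) \<Rightarrow> nat list set \<Rightarrow> bool" where
  "is_code N A C \<longleftrightarrow> C \<noteq> {} \<and> C \<subseteq> Bstar N A \<and>
     (\<forall>us vs. set us \<subseteq> C \<longrightarrow> set vs \<subseteq> C \<longrightarrow> concat us = concat vs \<longrightarrow> us = vs)"

definition is_prefix_code :: "nat \<Rightarrow> (nat \<Rightarrow> nat \<Rightarrow> nat) \<Rightarrow> nat list set \<Rightarrow> bool" where
  "is_prefix_code N A C \<longleftrightarrow> is_code N A C \<and>
     (\<forall>u\<in>C. \<forall>v\<in>C. prefix u v \<longrightarrow> u = v)"

end

theory Submission imports Defs begin

lemma length_word[simp]: "length (word x a b) = b - a"
  by (simp add: word_def)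

lemma word_append: "a \<le> b \<Longrightarrow> b \<le> c \<Longrightarrow> word x a c = word x a b @ word x b c"
  unfolding word_def by (metis le_add_diff_inverse map_append upt_add_eq_append)

lemma word_shift: "word (\<lambda>n. x (a + n)) p q = word x (a + p) (a + q)"
  unfolding word_def by (rule nth_equalityI) (auto simp: add.assoc)

lemma XA_shift: "x \<in> XA N A \<Longrightarrow> (\<lambda>n. x (a + n)) \<in> XA N A"
  unfolding XA_def by auto

lemma word_Bstar: "x \<in> XA N A \<Longrightarrow> a \<le> b \<Longrightarrow> word x a b \<in> Bstar N A"
proof -
  assume "x \<in> XA N A" "a \<le> b"
  then have "word x a b = word x a (a + length (word x a b))" by simp
  then show ?thesis unfolding Bstar_def using \<open>x \<in> XA N A\<close> by blast
qed

lemma word_concat: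
  assumes "mono k" "\<forall>n. word x (k n) (k (Suc n)) = f n"
  shows "word x (k 0) (k m) = concat (map f [0..<m])"
proof (induction m)
  case 0 then show ?case by (simp add: word_def)
next
  case (Suc m)
  have "word x (k 0) (k (Suc m)) = word x (k 0) (k m) @ word x (k m) (k (Suc m))"
    by (rule word_append) (use assms(1) in \<open>auto simp: mono_def\<close>)
  then show ?case using Suc assms(2) by simp
qed

lemma parse_unique:
  assumes pu: "\<forall>a\<in>{1..M}. \<forall>b\<in>{1..M}. prefix (\<omega> a) (\<omega> b) \<longrightarrow> a = b"
    and inj: "inj_on \<omega> {1..M}"
    and k: "k 0 = 0" "strict_mono (k::nat\<Rightarrow>nat)" "\<forall>n. i n \<in> {1..M} \<and> word x (k n) (k (Suc n)) = \<omega> (i n)"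
    and k': "k' 0 = 0" "strict_mono (k'::nat\<Rightarrow>nat)" "\<forall>n. i' n \<in> {1..M} \<and> word x (k' n) (k' (Suc n)) = \<omega> (i' n)"
  shows "k = k' \<and> i = i'"
proof -
  have kk: "k n = k' n" for n
  proof (induction n)
    case 0 then show ?case using k k' by simp
  next
    case (Suc n)
    let ?p = "k n" let ?b = "k (Suc n)" let ?b' = "k' (Suc n)"
    have lt: "?p < ?b" "?p < ?b'" using k(2) k'(2) Suc by (metis lessI strict_mono_def)+
    have w1: "word x ?p ?b = \<omega> (i n)" and w2: "word x ?p ?b' = \<omega> (i' n)"
      using k(3) k'(3) Suc by metis+
    have "i n = i' n"
    proof (cases "?b \<le> ?b'")
      case True
      then have "prefix (word x ?p ?b) (word x ?p ?b')" using word_append[of ?p ?b ?b' x] lt by auto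
      then show ?thesis using pu w1 w2 k(3) k'(3) by metis
    next
      case False
      then have "prefix (word x ?p ?b') (word x ?p ?b)" using word_append[of ?p ?b' ?b x] lt by auto
      then show ?thesis using pu w1 w2 k(3) k'(3) by metis
    qed
    then have "length (word x ?p ?b) = length (word x ?p ?b')" using w1 w2 by simp
    then show ?case using lt by simp
  qed
  moreover have "i n = i' n" for n
  proof -
    have "\<omega> (i n) = \<omega> (i' n)" using k(3) k'(3) kk by metis
    then show ?thesis using inj k(3) k'(3) by (meson inj_onD)
  qed
  ultimately show ?thesis by auto
qed


primrec parse :: "(nat \<Rightarrow> nat) \<Rightarrow> (nat \<Rightarrow> nat list) \<Rightarrow> nat \<Rightarrow> nat" where
  "parse f w 0 = 0"
| "parse f w (Suc n) = parse f w n + length (w (f (parse f w n)))"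

lemma concat_take_Suc:
  "j < length is \<Longrightarrow> concat (map w (take (Suc j) is)) = concat (map w (take j is)) @ w (is ! j)"
  by (simp add: take_Suc_conv_app_nth)

lemma concat_split:
  "j < length is \<Longrightarrow> concat (map w is) = concat (map w (take j is)) @ w (is ! j) @ concat (map w (drop (Suc j) is))"
  by (metis concat_take_Suc append.assoc append_take_drop_id concat_append map_append)

theorem mainTheorem4:
  fixes N M :: nat and A :: "nat \<Rightarrow> nat \<Rightarrow> nat" and \<omega> :: "nat \<Rightarrow> nat list"
  assumes A01: "\<forall>i\<in>{1..N}. \<forall>j\<in>{1..N}. A i j \<in> {0, 1}"
    and inj: "inj_on \<omega> {1..M}"
    and pc: "is_prefix_code N A (\<omega> ` {1..M})"
  shows "(\<forall>\<gamma>\<in>Bstar N A. \<exists>\<eta>\<in>Bstar N A. \<gamma> @ \<eta> \<in> Bstar N A \<and>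
            (\<exists>!is. set is \<subseteq> {1..M} \<and> \<gamma> @ \<eta> = concat (map \<omega> is)))
     \<longleftrightarrow>
     (\<forall>x\<in>XA N A. \<exists>!(k, i). k 0 = 0 \<and> strict_mono (k :: nat \<Rightarrow> nat) \<and>
            (\<forall>n. i n \<in> {1..M} \<and> word x (k n) (k (Suc n)) = \<omega> (i n)))"
proof -
  have code: "\<omega> ` {1..M} \<noteq> {}"
    "\<And>us vs. set us \<subseteq> \<omega> ` {1..M} \<Longrightarrow> set vs \<subseteq> \<omega> ` {1..M} \<Longrightarrow> concat us = concat vs \<Longrightarrow> us = vs"
    using pc unfolding is_prefix_code_def is_code_def by blast+
  have nonempty: "\<omega> i \<noteq> []" if "i \<in> {1..M}" for i
  proof
    assume "\<omega> i = []"
    moreover have "\<omega> i \<in> \<omega> ` {1..M}" using that by blast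
    ultimately have "[\<omega> i] = []" using code(2)[of "[\<omega> i]" "[]"] by simp
    then show False by simp
  qed
  have pu: "\<forall>a\<in>{1..M}. \<forall>b\<in>{1..M}. prefix (\<omega> a) (\<omega> b) \<longrightarrow> a = b"
    using pc inj unfolding is_prefix_code_def by (meson image_eqI inj_onD)
  have uniq_is: "is = js" if "set is \<subseteq> {1..M}" "set js \<subseteq> {1..M}"
    "concat (map \<omega> is) = concat (map \<omega> js)" for "is" js
  proof -
    have "map \<omega> is = map \<omega> js" using code(2)[of "map \<omega> is" "map \<omega> js"] that by auto
    moreover have "inj_on \<omega> (set is \<union> set js)" using inj that by (meson inj_on_subset le_sup_iff)
    ultimately show ?thesis using inj_on_map_eq_map by blast
  qed
  show ?thesis
  proof
    assume H: "\<forall>\<gamma>\<in>Bstar N A. \<exists>\<eta>\<in>Bstar N A. \<gamma> @ \<eta> \<in> Bstar N A \<and>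
            (\<exists>!is. set is \<subseteq> {1..M} \<and> \<gamma> @ \<eta> = concat (map \<omega> is))"
    show "\<forall>x\<in>XA N A. \<exists>!(k, i). k 0 = 0 \<and> strict_mono (k :: nat \<Rightarrow> nat) \<and>
            (\<forall>n. i n \<in> {1..M} \<and> word x (k n) (k (Suc n)) = \<omega> (i n))"
    proof
      fix x assume x: "x \<in> XA N A"
      define L where "L = Max (length ` \<omega> ` {1..M})"
      have Lb: "length (\<omega> i) \<le> L" if "i \<in> {1..M}" for i
        unfolding L_def using that by (intro Max_ge) auto
      obtain i0 where i0: "i0 \<in> {1..M}" using code(1) by blast
      have L1: "1 \<le> L" using Lb[OF i0] nonempty[OF i0] by (cases "\<omega> i0") auto
      define good where "good p i \<longleftrightarrow> i \<in> {1..M} \<and> word x p (p + length (\<omega> i)) = \<omega> i" for p i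
      define nxt where "nxt p = (SOME i. good p i)" for p
      define k where "k = parse nxt \<omega>"
      have k0: "k 0 = 0" and kS: "k (Suc n) = k n + length (\<omega> (nxt (k n)))" for n
        unfolding k_def by simp_all
      have kmono: "k n \<le> k (Suc n)" for n using kS by simp
      have goodeq: "\<omega> i = \<omega> j" if "good p i" "good p j" for p i j
      proof -
        have "prefix (\<omega> i) (\<omega> j) \<or> prefix (\<omega> j) (\<omega> i)"
        proof (cases "length (\<omega> i) \<le> length (\<omega> j)")
          case True
          then show ?thesis using that word_append[of p "p + length (\<omega> i)" "p + length (\<omega> j)" x]
            unfolding good_def by (metis add_le_mono1 le_add1 add.commute prefixI)
        next
          case False
          then show ?thesis using that word_append[of p "p + length (\<omega> j)" "p + length (\<omega> i)" x]
            unfolding good_def by (metis add_le_mono1 le_add1 add.commute prefixI nat_le_linear)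
        qed
        then show ?thesis using pu that unfolding good_def by metis
      qed
      have key: "\<exists>i. good (k n) i" for n
      proof -
        define m where "m = k n + L"
        have "word x 0 m \<in> Bstar N A" using x by (rule word_Bstar) simp
        then obtain \<eta> "is" where isP: "set is \<subseteq> {1..M}" "word x 0 m @ \<eta> = concat (map \<omega> is)"
          using H by blast
        define W where "W = concat (map \<omega> is)"
        have lenW: "m \<le> length W" using isP(2) unfolding W_def by (metis le_add1 length_append length_word minus_nat.diff_0)
        have gd: "good p (is ! j)" if "j < length is" "p = length (concat (map \<omega> (take j is)))" "p + L \<le> m" for j p
        proof -
          have ij: "is ! j \<in> {1..M}" using isP(1) that(1) nth_mem by blast
          let ?l = "length (\<omega> (is ! j))"
          have le: "p + ?l \<le> m" using Lb[OF ij] that(3) by simp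
          have "word x 0 m = word x 0 p @ word x p (p + ?l) @ word x (p + ?l) m"
          proof -
            have "p \<le> m" using le by simp
            then have "word x 0 m = word x 0 p @ word x p m" by (intro word_append) auto
            moreover have "word x p m = word x p (p + ?l) @ word x (p + ?l) m"
              using le by (intro word_append) auto
            ultimately show ?thesis by simp
          qed
          moreover have "W = concat (map \<omega> (take j is)) @ \<omega> (is ! j) @ concat (map \<omega> (drop (Suc j) is))"
            unfolding W_def using concat_split[OF that(1)] .
          ultimately have "word x p (p + ?l) = \<omega> (is ! j)"
            using isP(2) that(2) unfolding W_def by (simp add: le_add1)
          then show ?thesis using ij unfolding good_def by simp
        qed
        have Q: "k n' + L \<le> m \<longrightarrow> (\<exists>j < length is. k n' = length (concat (map \<omega> (take j is))))" for n'
        proof (induction n')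
          case 0
          have "is \<noteq> []" using lenW L1 unfolding W_def m_def by auto
          then show ?case using k0 by auto
        next
          case (Suc n')
          show ?case
          proof
            assume a: "k (Suc n') + L \<le> m"
            then have "k n' + L \<le> m" using kmono[of n'] by linarith
            then obtain j where j: "j < length is" "k n' = length (concat (map \<omega> (take j is)))"
              using Suc by blast
            have g: "good (k n') (is ! j)" using gd[OF j] \<open>k n' + L \<le> m\<close> by simp
            then have "good (k n') (nxt (k n'))" unfolding nxt_def by (rule someI)
            then have "\<omega> (nxt (k n')) = \<omega> (is ! j)" using goodeq g by blast
            then have ks: "k (Suc n') = length (concat (map \<omega> (take (Suc j) is)))"
              using kS[of n'] j concat_take_Suc[OF j(1), of \<omega>] by simp
            have "Suc j < length is"
            proof (rule ccontr)
              assume "\<not> Suc j < length is"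
              then have "Suc j = length is" using j(1) by simp
              then have "k (Suc n') = length W" using ks unfolding W_def by simp
              then show False using a lenW L1 by simp
            qed
            then show "\<exists>j < length is. k (Suc n') = length (concat (map \<omega> (take j is)))" using ks by blast
          qed
        qed
        then obtain j where "j < length is" "k n = length (concat (map \<omega> (take j is)))"
          unfolding m_def by blast
        then show ?thesis using gd m_def by blast
      qed
      define i where "i n = nxt (k n)" for n
      have gi: "good (k n) (i n)" for n unfolding i_def nxt_def using key by (metis someI_ex)
      have props: "k 0 = 0 \<and> strict_mono k \<and> (\<forall>n. i n \<in> {1..M} \<and> word x (k n) (k (Suc n)) = \<omega> (i n))"
      proof (intro conjI allI)
        show "strict_mono k" unfolding strict_mono_Suc_iff
        proof
          fix n show "k n < k (Suc n)" using kS[of n] nonempty gi[of n] unfolding good_def i_def by simp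
        qed
      qed (use k0 gi kS in \<open>auto simp: good_def i_def\<close>)
      show "\<exists>!(k, i). k 0 = 0 \<and> strict_mono (k :: nat \<Rightarrow> nat) \<and>
            (\<forall>n. i n \<in> {1..M} \<and> word x (k n) (k (Suc n)) = \<omega> (i n))"
      proof (rule ex1I[of _ "(k, i)"])
        show "case (k, i) of (k, i) \<Rightarrow> k 0 = 0 \<and> strict_mono (k :: nat \<Rightarrow> nat) \<and>
            (\<forall>n. i n \<in> {1..M} \<and> word x (k n) (k (Suc n)) = \<omega> (i n))" using props by simp
      next
        fix y assume "case y of (k, i) \<Rightarrow> k 0 = 0 \<and> strict_mono (k :: nat \<Rightarrow> nat) \<and>
            (\<forall>n. i n \<in> {1..M} \<and> word x (k n) (k (Suc n)) = \<omega> (i n))"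
        then obtain k' i' where y: "y = (k', i')" "k' 0 = 0" "strict_mono k'"
          "\<forall>n. i' n \<in> {1..M} \<and> word x (k' n) (k' (Suc n)) = \<omega> (i' n)" by (cases y) auto
        have "k' = k \<and> i' = i"
          by (rule parse_unique[OF pu inj y(2-4)]) (use props in blast)+
        then show "y = (k, i)" using y(1) by simp
      qed
    qed
  next
    assume H: "\<forall>x\<in>XA N A. \<exists>!(k, i). k 0 = 0 \<and> strict_mono (k :: nat \<Rightarrow> nat) \<and>
            (\<forall>n. i n \<in> {1..M} \<and> word x (k n) (k (Suc n)) = \<omega> (i n))"
    show "\<forall>\<gamma>\<in>Bstar N A. \<exists>\<eta>\<in>Bstar N A. \<gamma> @ \<eta> \<in> Bstar N A \<and>
            (\<exists>!is. set is \<subseteq> {1..M} \<and> \<gamma> @ \<eta> = concat (map \<omega> is))"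
    proof
      fix \<gamma> assume g: "\<gamma> \<in> Bstar N A"
      have ex1: "\<exists>!is. set is \<subseteq> {1..M} \<and> w = concat (map \<omega> is)"
        if "set is0 \<subseteq> {1..M}" "w = concat (map \<omega> is0)" for w is0
      proof (rule ex1I[of _ is0])
        show "set is0 \<subseteq> {1..M} \<and> w = concat (map \<omega> is0)" using that by (rule conjI)
      next
        fix js assume js: "set js \<subseteq> {1..M} \<and> w = concat (map \<omega> js)"
        then have "w = concat (map \<omega> js)" by (rule conjunct2)
        then have "concat (map \<omega> js) = concat (map \<omega> is0)" using that(2) by (rule trans[OF sym])
        then show "js = is0" using uniq_is[OF conjunct1[OF js] that(1)] by blast
      qed
      show "\<exists>\<eta>\<in>Bstar N A. \<gamma> @ \<eta> \<in> Bstar N A \<and>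
            (\<exists>!is. set is \<subseteq> {1..M} \<and> \<gamma> @ \<eta> = concat (map \<omega> is))"
      proof (cases "\<gamma> = []")
        case True
        have "[] \<in> Bstar N A" unfolding Bstar_def by simp
        moreover have "\<exists>!is. set is \<subseteq> {1..M} \<and> [] @ [] = concat (map \<omega> is)"
          using ex1[of "[] @ []" "[]"] by simp
        ultimately show ?thesis unfolding True by - (intro bexI[of _ "[]"] conjI, simp_all)
      next
        case False
        then obtain x a where x: "x \<in> XA N A" "\<gamma> = word x a (a + length \<gamma>)"
        proof -
          from g False have "\<gamma> \<in> {w. \<exists>x\<in>XA N A. \<exists>a. w = word x a (a + length w)}"
            unfolding Bstar_def by simp
          then show ?thesis using that by blast
        qed
        define x' where "x' = (\<lambda>n. x (a + n))"
        have x': "x' \<in> XA N A" unfolding x'_def using x(1) by (rule XA_shift)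
        obtain k i where ki: "k 0 = 0" "strict_mono k"
          "\<forall>n. i n \<in> {1..M} \<and> word x' (k n) (k (Suc n)) = \<omega> (i n)"
        proof -
          have "\<exists>!(k, i). k 0 = 0 \<and> strict_mono (k :: nat \<Rightarrow> nat) \<and>
            (\<forall>n. i n \<in> {1..M} \<and> word x' (k n) (k (Suc n)) = \<omega> (i n))"
            using H x' by (rule bspec)
          then obtain p where "case p of (k, i) \<Rightarrow> k 0 = 0 \<and> strict_mono (k :: nat \<Rightarrow> nat) \<and>
            (\<forall>n. i n \<in> {1..M} \<and> word x' (k n) (k (Suc n)) = \<omega> (i n))"
            by (rule ex1E) 
          then show ?thesis using that by (cases p) (simp only: prod.case, blast)
        qed
        let ?g = "length \<gamma>"
        have kg: "?g \<le> k ?g" using ki(2) by (rule strict_mono_imp_increasing)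
        have g': "\<gamma> = word x' 0 ?g" using x(2) unfolding x'_def word_shift by simp
        have "word x' 0 (k ?g) = word x' 0 ?g @ word x' ?g (k ?g)"
          using kg by (intro word_append) auto
        moreover have "word x' 0 (k ?g) = concat (map (\<omega> \<circ> i) [0..<?g])"
        proof -
          have "mono k" using ki(2) by (rule strict_mono_mono)
          moreover have "\<forall>n. word x' (k n) (k (Suc n)) = (\<omega> \<circ> i) n" using ki(3) by simp
          ultimately show ?thesis using word_concat[of k x' "\<omega> \<circ> i" ?g] ki(1) by simp
        qed
        ultimately have eq: "\<gamma> @ word x' ?g (k ?g) = concat (map \<omega> (map i [0..<?g]))"
          using g' by simp
        have "set (map i [0..<?g]) \<subseteq> {1..M}" using ki(3) by auto
        moreover have "word x' ?g (k ?g) \<in> Bstar N A" using x' kg by (rule word_Bstar)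
        moreover have "\<gamma> @ word x' ?g (k ?g) \<in> Bstar N A"
          using word_Bstar[OF x', of 0 "k ?g"] \<open>word x' 0 (k ?g) = word x' 0 ?g @ _\<close> g' by simp
        moreover note ex1[OF \<open>set (map i [0..<?g]) \<subseteq> {1..M}\<close> eq]
        ultimately show ?thesis by - (intro bexI[of _ "word x' ?g (k ?g)"] conjI, simp_all)
      qed
    qed
  qed
qed

end
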